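(* Let $C_1,h>0$ and $\varphi_1(x)=\frac{1}{C_1}\varphi_0(x/h)$. Let $f:\mathbb{R}\to\mathbb{R}$ be convex with $|f'|\le 1/(C_1h)$. Then for every $x\in\mathbb{R}$, $(f\,\square\,\varphi_1)(x)\le f(x)-\frac{C_1}{2}\,|(Df)(x)|^2.$
   Context: $\varphi_0(x)=\frac12x^2$ for $|x|\le1$ and $\varphi_0(x)=|x|-\frac12$ for $|x|>1$; $(f\,\square\,\varphi)(x)=\inf_y\{f(y)+\varphi(x-y)\}$; $f'(x)=\limsup_{s\to0}(f(x+s)-f(x))/s$. For convex $f$, let $x_0$ be a point where $f$ attains its minimum; if no minimum is attained, $x_0=-\infty$ if $f$ is non-decreasing and $x_0=+\infty$ if $f$ is non-increasing. The discrete gradient with step $h$ is $(Df)(x)=f(x)-f(x-h)$ for $x>x_0+h$, $(Df)(x)=f(x)-f(x_0)$ for $x\in[x_0-h,x_0+h]$, $(Df)(x)=f(x)-f(x+h)$ for $x<x_0-h$. *)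

theory Defs
  imports "HOL-Analysis.Analysis"
begin

definition phi0 :: "real \<Rightarrow> real" where
  "phi0 x = (if \<bar>x\<bar> \<le> 1 then x^2 / 2 else \<bar>x\<bar> - 1/2)"

text \<open>Infimal convolution, valued in the extended reals (so it is always defined).\<close>
definition infconv :: "(real \<Rightarrow> real) \<Rightarrow> (real \<Rightarrow> real) \<Rightarrow> real \<Rightarrow> ereal" where
  "infconv f \<phi> x = (INF y. ereal (f y + \<phi> (x - y)))"

definition upper_deriv :: "(real \<Rightarrow> real) \<Rightarrow> real \<Rightarrow> ereal" where
  "upper_deriv f x = Limsup (at (0::real)) (\<lambda>s. ereal ((f (x + s) - f x) / s))"

definition is_x0 :: "(real \<Rightarrow> real) \<Rightarrow> ereal \<Rightarrow> bool" where
  "is_x0 f x0 \<longleftrightarrow>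
     (\<exists>a. x0 = ereal a \<and> (\<forall>y. f a \<le> f y))
   \<or> ((\<nexists>a. \<forall>y. f a \<le> f y) \<and> x0 = -\<infinity> \<and> mono f)
   \<or> ((\<nexists>a. \<forall>y. f a \<le> f y) \<and> x0 = \<infinity> \<and> antimono f)"

definition Dgrad :: "(real \<Rightarrow> real) \<Rightarrow> real \<Rightarrow> ereal \<Rightarrow> real \<Rightarrow> real" where
  "Dgrad f h x0 x =
     (if ereal x > x0 + ereal h then f x - f (x - h)
      else if ereal x < x0 - ereal h then f x - f (x + h)
      else f x - f (real_of_ereal x0))"

end

theory Submission
  imports Defs
begin

lemma three:
  assumes cf: "convex_on UNIV f" and "a < b" "b < c"
  shows "(f b - f a)/(b-a) \<le> (f c - f a)/(c-a) \<and> (f c - f a)/(c-a) \<le> (f c - f b)/(c-b)"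
proof -
  have cv: "convex_on {a..c} f" using cf convex_on_subset by blast
  have h: "f b \<le> (f c - f a) / (c - a) * (b - a) + f a"
    using convex_onD_Icc'[OF cv, of b] assms by simp
  let ?m = "(f c - f a) / (c - a)"
  have 1: "(f b - f a)/(b-a) \<le> ?m" using h assms by (simp add: divide_le_eq)
  have e: "f c = ?m * (c - a) + f a" using assms by simp
  have "?m * (c - b) = ?m * (c - a) - ?m * (b - a)" by (simp add: right_diff_distrib)
  then have "f c - f b \<ge> ?m * (c - b)" using h e by linarith
  then have 2: "?m \<le> (f c - f b)/(c-b)" using assms by (simp add: le_divide_eq)
  show ?thesis using 1 2 by simp
qed

lemma qmono:
  assumes cf: "convex_on UNIV f" and "t < s" "t \<noteq> 0" "s \<noteq> 0"
  shows "(f (x + t) - f x) / t \<le> (f (x + s) - f x) / s"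
proof -
  consider "0 < t" | "t < 0" "0 < s" | "s < 0" using assms by linarith
  then show ?thesis
  proof cases
    case 1
    with three[OF cf, of x "x+t" "x+s"] assms show ?thesis by simp
  next
    case 2
    with three[OF cf, of "x+t" x "x+s"] assms show ?thesis
      by (smt (verit, ccfv_SIG) minus_divide_divide)
  next
    case 3
    with three[OF cf, of "x+t" "x+s" x] assms show ?thesis
      by (smt (verit, ccfv_SIG) minus_divide_divide)
  qed
qed

lemma lip:
  assumes cf: "convex_on UNIV f" and L: "\<And>x. \<bar>upper_deriv f x\<bar> \<le> ereal L"
  shows "\<bar>f y - f x\<bar> \<le> L * \<bar>y - x\<bar>"
proof -
  have A: "f (x + s) - f x \<ge> - L * s" if "s > 0" for x s
  proof -
    have ev: "eventually (\<lambda>t. ereal ((f (x + t) - f x) / t) \<le> ereal ((f (x + s) - f x) / s)) (at (0::real))"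
      unfolding eventually_at using that
      by (intro exI[of _ s]) (auto intro!: qmono[OF cf] simp: dist_real_def)
    have "upper_deriv f x \<le> ereal ((f (x + s) - f x) / s)"
      unfolding upper_deriv_def by (rule Limsup_bounded[OF ev])
    moreover have "- ereal L \<le> upper_deriv f x" using L[of x]
      by (cases "upper_deriv f x") (auto split: if_splits)
    ultimately have "ereal (- L) \<le> ereal ((f (x + s) - f x) / s)" by (metis order_trans uminus_ereal.simps(1))
    then have "- L \<le> (f (x + s) - f x) / s" by simp
    then show ?thesis using that by (simp add: le_divide_eq)
  qed
  have B: "f (x + s) - f x \<ge> L * s" if "s < 0" for x s
  proof -
    have ev: "eventually (\<lambda>t. ereal ((f (x + s) - f x) / s) \<le> ereal ((f (x + t) - f x) / t)) (at (0::real))"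
      unfolding eventually_at using that
      by (intro exI[of _ "-s"]) (auto intro!: qmono[OF cf] simp: dist_real_def)
    have "ereal ((f (x + s) - f x) / s) \<le> Liminf (at (0::real)) (\<lambda>t. ereal ((f (x + t) - f x) / t))"
      by (rule Liminf_bounded[OF ev])
    also have "\<dots> \<le> upper_deriv f x"
      unfolding upper_deriv_def by (rule Liminf_le_Limsup) simp
    also have "\<dots> \<le> ereal L" using L[of x]
      by (cases "upper_deriv f x") (auto split: if_splits)
    finally have "(f (x + s) - f x) / s \<le> L" by simp
    then show ?thesis using that by (simp add: divide_le_eq)
  qed
  show ?thesis
  proof (cases "x < y")
    case True
    have 1: "f y - f x \<ge> - L * (y - x)" using A[of "y - x" x] True by simp
    have 2: "f x - f y \<ge> L * (x - y)" using B[of "x - y" y] True by simp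
    show ?thesis using 1 2 True by (simp add: abs_le_iff algebra_simps)
  next
    case False
    show ?thesis
    proof (cases "y < x")
      case True
      have 1: "f x - f y \<ge> - L * (x - y)" using A[of "x - y" y] True by simp
      have 2: "f y - f x \<ge> L * (y - x)" using B[of "y - x" x] True by simp
      show ?thesis using 1 2 True by (simp add: abs_le_iff algebra_simps)
    qed (use False in simp)
  qed
qed

lemma gen:
  fixes f :: "real \<Rightarrow> real" and C1 h x z :: real
  assumes cf: "convex_on UNIV f" and C1: "C1 > 0" and h: "h > 0"
    and xz: "\<bar>x - z\<bar> \<le> h" and D0: "0 \<le> f x - f z" and D1: "f x - f z \<le> 1 / C1"
  shows "infconv f (\<lambda>t. (1 / C1) * phi0 (t / h)) x \<le> ereal (f x - C1 / 2 * \<bar>f x - f z\<bar>^2)"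
proof -
  define D where "D = f x - f z"
  define s where "s = C1 * D"
  have s0: "0 \<le> s" using C1 D0 by (simp add: s_def D_def)
  have s1: "s \<le> 1" using C1 D1 by (simp add: s_def D_def field_simps)
  define y where "y = (1 - s) * x + s * z"
  have fy: "f y \<le> (1 - s) * f x + s * f z"
    using convex_onD[OF cf, of s x z] s0 s1 by (simp add: y_def)
  have xy: "x - y = s * (x - z)" by (simp add: y_def algebra_simps)
  have "\<bar>(x - y) / h\<bar> = s * (\<bar>x - z\<bar> / h)" using xy s0 h by (simp add: abs_mult)
  also have "\<dots> \<le> s" using xz h s0 by (simp add: mult_left_mono divide_le_eq)
  finally have ab: "\<bar>(x - y) / h\<bar> \<le> s" .
  then have ab1: "\<bar>(x - y) / h\<bar> \<le> 1" using s1 by linarith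
  have "((x - y) / h)^2 \<le> s^2"
    using ab by (metis abs_ge_zero abs_le_square_iff abs_of_nonneg s0 power2_abs)
  then have ph: "phi0 ((x - y) / h) \<le> s^2 / 2" using ab1 by (simp add: phi0_def)
  have "(1 / C1) * phi0 ((x - y) / h) \<le> (1 / C1) * (s^2 / 2)"
    using ph C1 by (intro mult_left_mono) auto
  also have "\<dots> = C1 * D^2 / 2" using C1 by (simp add: s_def power2_eq_square field_simps)
  finally have pp: "(1 / C1) * phi0 ((x - y) / h) \<le> C1 * D^2 / 2" .
  have "\<bar>f x - f z\<bar>^2 = D^2" by (simp add: D_def)
  have "C1 / 2 * \<bar>f x - f z\<bar>^2 = C1 * D^2 / 2" by (simp add: D_def)
  have "(1 - s) * f x + s * f z = f x - C1 * D^2" by (simp add: s_def D_def power2_eq_square algebra_simps)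
  then have "f y + (1 / C1) * phi0 ((x - y) / h) \<le> f x - C1 / 2 * \<bar>f x - f z\<bar>^2"
    using fy pp \<open>C1 / 2 * \<bar>f x - f z\<bar>^2 = C1 * D^2 / 2\<close> by linarith
  moreover have "infconv f (\<lambda>t. (1 / C1) * phi0 (t / h)) x \<le> ereal (f y + (1 / C1) * phi0 ((x - y) / h))"
    unfolding infconv_def by (rule INF_lower) simp
  ultimately show ?thesis by (meson ereal_less_eq(3) order_trans)
qed

lemma between:
  fixes f :: "real \<Rightarrow> real" and a x z :: real
  assumes cf: "convex_on UNIV f" and fa: "f a \<le> f x" and "min a x \<le> z" "z \<le> max a x"
  shows "f z \<le> f x"
proof (cases "a \<le> x")
  case True
  have "convex_on {a..x} f" using convex_on_subset[OF cf, of "{a..x}"] by simp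
  moreover have "z \<in> {a..x}" using True assms(3,4) by (simp add: min_def max_def)
  ultimately have "f z \<le> max (f a) (f x)" by (rule convex_on_le_max)
  then show ?thesis using fa by linarith
next
  case False
  have "convex_on {x..a} f" using convex_on_subset[OF cf, of "{x..a}"] by simp
  moreover have "z \<in> {x..a}" using False assms(3,4) by (simp add: min_def max_def)
  ultimately have "f z \<le> max (f x) (f a)" by (rule convex_on_le_max)
  then show ?thesis using fa by linarith
qed

theorem lemma2p3:
  fixes f :: "real \<Rightarrow> real" and C1 h :: real and x0 :: ereal
  assumes "C1 > 0" and "h > 0"
    and "convex_on UNIV f"
    and "\<And>x. \<bar>upper_deriv f x\<bar> \<le> ereal (1 / (C1 * h))"
    and "is_x0 f x0"
  shows "\<forall>x. infconv f (\<lambda>t. (1 / C1) * phi0 (t / h)) x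
               \<le> ereal (f x - C1 / 2 * \<bar>Dgrad f h x0 x\<bar>^2)"
proof
  fix x
  have key: "\<exists>z. Dgrad f h x0 x = f x - f z \<and> \<bar>x - z\<bar> \<le> h \<and> 0 \<le> f x - f z"
    using assms(5) unfolding is_x0_def
  proof (elim disjE conjE exE)
    fix a assume x0: "x0 = ereal a" and mn: "\<forall>y. f a \<le> f y"
    show ?thesis
    proof (cases "a + h < x")
      case True
      have d: "Dgrad f h x0 x = f x - f (x - h)" using True by (simp add: Dgrad_def x0)
      have "f (x - h) \<le> f x"
        by (rule between[OF assms(3) mn[rule_format, of x]]) (use True assms(2) in linarith)+
      then show ?thesis using d assms(2) by (intro exI[of _ "x - h"]) simp
    next
      case F1: False
      show ?thesis
      proof (cases "x < a - h")
        case True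
        have d: "Dgrad f h x0 x = f x - f (x + h)" using True F1 by (simp add: Dgrad_def x0)
        have "f (x + h) \<le> f x"
          by (rule between[OF assms(3) mn[rule_format, of x]]) (use True assms(2) in linarith)+
        then show ?thesis using d assms(2) by (intro exI[of _ "x + h"]) simp
      next
        case False
        have d: "Dgrad f h x0 x = f x - f a" using False F1 by (simp add: Dgrad_def x0)
        have "\<bar>x - a\<bar> \<le> h" using False F1 by linarith
        then show ?thesis using d mn by (intro exI[of _ a]) simp
      qed
    qed
  next
    assume x0: "x0 = - \<infinity>" and m: "mono f"
    have d: "Dgrad f h x0 x = f x - f (x - h)" by (simp add: Dgrad_def x0)
    have "f (x - h) \<le> f x" using m assms(2) by (simp add: mono_def)
    then show ?thesis using d assms(2) by (intro exI[of _ "x - h"]) simp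
  next
    assume x0: "x0 = \<infinity>" and m: "antimono f"
    have d: "Dgrad f h x0 x = f x - f (x + h)" by (simp add: Dgrad_def x0)
    have "f (x + h) \<le> f x" using m assms(2) by (simp add: antimono_def)
    then show ?thesis using d assms(2) by (intro exI[of _ "x + h"]) simp
  qed
  then obtain z where z: "Dgrad f h x0 x = f x - f z" "\<bar>x - z\<bar> \<le> h" "0 \<le> f x - f z" by blast
  have "\<bar>f x - f z\<bar> \<le> 1 / (C1 * h) * \<bar>x - z\<bar>" using lip[OF assms(3) assms(4)] .
  also have "\<dots> \<le> 1 / (C1 * h) * h" using z(2) assms(1,2) by (intro mult_left_mono) auto
  also have "\<dots> = 1 / C1" using assms(2) by simp
  finally have "f x - f z \<le> 1 / C1" by simp
  from gen[OF assms(3,1,2) z(2,3) this] z(1)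
  show "infconv f (\<lambda>t. (1 / C1) * phi0 (t / h)) x \<le> ereal (f x - C1 / 2 * \<bar>Dgrad f h x0 x\<bar>^2)" by simp
qed

end
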